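(* Let $P\ge 1$, $U\ge 0$ and $L$ be integers with $L\leq -\frac{U+1}{2}$, and let $B_{\mathrm{OFL}}:=(1-2^{-P})\,2^{U+1}$. Then for every real $\nu\geq 0$ and every real $z$ with $0<z\leq B_{\mathrm{OFL}}$, the exponentially scaled function satisfies $\tilde K_\nu(z)\geq 2^{L}$ (i.e. $\tilde K_\nu(z)$ does not underflow the smallest positive normal floating-point number $2^L$). *)

theory Defs
  imports "HOL-Analysis.Analysis"
begin

text \<open>Modified Bessel function of the second kind of real order nu, for z > 0,
  via the standard integral representation (DLMF 10.32.9):
  K_nu(z) = integral from 0 to infinity of exp(-z cosh t) cosh(nu t) dt.\<close>
definition besselK :: "real \<Rightarrow> real \<Rightarrow> real" where
  "besselK \<nu> z = integral {0..} (\<lambda>t. exp (- z * cosh t) * cosh (\<nu> * t))"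

definition besselK_scaled :: "real \<Rightarrow> real \<Rightarrow> real" where
  "besselK_scaled \<nu> z = exp z * besselK \<nu> z"

end

theory Submission
  imports Defs
begin

lemma exp_minus_E3:
  fixes A :: real assumes "0 \<le> A"
  shows "1 - A + A^2/2 - A^3/6 \<le> exp (- A)"
proof -
  obtain t where t: "exp (-A) = (\<Sum>m<4. ((-A) ^ m) / fact m) + (exp t / fact 4) * (-A) ^ 4"
    using Maclaurin_exp_le[of "-A" 4] by blast
  have "(\<Sum>m<4. ((-A) ^ m) / fact m) = 1 - A + A^2/2 - A^3/6"
    by (simp add: eval_nat_numeral fact_numeral)
  moreover have "0 \<le> (exp t / fact 4) * (-A) ^ 4" by simp
  ultimately show ?thesis using t by linarith
qed

lemma E3_mono:
  fixes A B :: real assumes "A \<le> B"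
  shows "1 - B + B^2/2 - B^3/6 \<le> 1 - A + A^2/2 - A^3/6"
proof -
  have "(1 - A + A^2/2 - A^3/6) - (1 - B + B^2/2 - B^3/6)
        = (B - A) * (1 - (A+B)/2 + (A^2 + A*B + B^2)/6)"
    by (simp add: field_simps power2_eq_square power3_eq_cube)
  moreover have "0 \<le> 1 - (A+B)/2 + (A^2 + A*B + B^2)/6"
  proof -
    have "1 - (A+B)/2 + (A^2 + A*B + B^2)/6 = ((A-B)^2/4 + 3*(A+B-2)^2/4 + 3) / 6"
      by (simp add: field_simps power2_eq_square)
    also have "\<dots> \<ge> 0" by simp
    finally show ?thesis .
  qed
  ultimately show ?thesis using assms
    by (smt (verit) mult_nonneg_nonneg)
qed

lemma cosh_upper:
  fixes h :: real assumes "0 \<le> h" "h \<le> 1"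
  shows "cosh h - 1 \<le> h^2/2 + h^4/8"
proof -
  obtain t1 where t1: "\<bar>t1\<bar> \<le> \<bar>h\<bar>" "exp h = (\<Sum>m<4. (h ^ m) / fact m) + (exp t1 / fact 4) * h ^ 4"
    using Maclaurin_exp_le[of h 4] by blast
  obtain t2 where t2: "\<bar>t2\<bar> \<le> \<bar>-h\<bar>" "exp (-h) = (\<Sum>m<4. ((-h) ^ m) / fact m) + (exp t2 / fact 4) * (-h) ^ 4"
    using Maclaurin_exp_le[of "-h" 4] by blast
  have "exp t1 \<le> exp 1" using t1(1) assms by simp
  then have e1: "exp t1 \<le> 3" using e_less_272 by linarith
  have "exp t2 \<le> exp 1" using t2(1) assms by simp
  then have e2: "exp t2 \<le> 3" using e_less_272 by linarith
  have c: "cosh h = (exp h + exp (-h)) / 2" by (simp add: cosh_def)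
  have h4: "0 \<le> h^4" by simp
  have "cosh h = 1 + h^2/2 + (exp t1 + exp t2) / 48 * h^4"
    using t1(2) t2(2) c by (simp add: eval_nat_numeral fact_numeral field_simps)
  moreover have "(exp t1 + exp t2) / 48 * h^4 \<le> 6/48 * h^4"
    using e1 e2 h4 by (intro mult_right_mono) auto
  ultimately show ?thesis by simp
qed

definition qpol :: "real \<Rightarrow> real" where
  "qpol x = 1 - x^2/2 + x^4/16 + x^6/96 - 3*x^8/512 - x^10/1024 - x^12/24576"

definition Qpol :: "real \<Rightarrow> real" where
  "Qpol x = x - x^3/6 + x^5/80 + x^7/672 - x^9/1536 - x^11/11264 - x^13/319488"

lemma qpol_eq:
  "1 - (x^2/2 + x^4/16) + (x^2/2 + x^4/16)^2/2 - (x^2/2 + x^4/16)^3/6 = qpol x"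
  unfolding qpol_def by (simp add: field_simps eval_nat_numeral)

lemma Qpol_deriv: "(Qpol has_real_derivative qpol x) (at x)"
  unfolding Qpol_def qpol_def
  by (auto intro!: derivative_eq_intros simp: field_simps eval_nat_numeral)

lemma Qpol_val: "1 \<le> Qpol (7/5)"
  unfolding Qpol_def by (simp add: eval_nat_numeral)

lemma integrand_bound:
  fixes z \<nu> t :: real
  assumes "0 < z" "0 \<le> \<nu>" "0 \<le> t"
  shows "\<bar>exp (- z * cosh t) * cosh (\<nu> * t)\<bar> \<le> exp ((\<nu>+1)^2 / z) * exp (- 1 * t)"
proof -
  define a where "a = \<nu> + 1"
  have c1: "cosh (\<nu> * t) \<le> exp (\<nu> * t)"
    using assms by (simp add: cosh_def)
  have c2: "exp t / 2 \<le> cosh t" by (simp add: cosh_def)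
  have c3: "t^2/2 \<le> exp t" using exp_lower_Taylor_quadratic[of t] assms
    by (smt (verit) zero_le_power2)
  have "z * (t^2/4) \<le> z * cosh t" using c2 c3 assms by (intro mult_left_mono) auto
  moreover have "a * t \<le> z * (t^2/4) + a^2 / z"
  proof -
    have "z * (t^2/4) + a^2 / z - a * t = (z * t / 2 - a)^2 / z"
      using assms by (simp add: field_simps power2_eq_square)
    also have "\<dots> \<ge> 0" using assms by simp
    finally show ?thesis by simp
  qed
  ultimately have ex: "- z * cosh t + \<nu> * t \<le> a^2 / z + (- 1 * t)"
    unfolding a_def by (simp add: algebra_simps)
  have "\<bar>exp (- z * cosh t) * cosh (\<nu> * t)\<bar> = exp (- z * cosh t) * cosh (\<nu> * t)"
    by simp
  also have "\<dots> \<le> exp (- z * cosh t) * exp (\<nu> * t)"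
    using c1 by (intro mult_left_mono) auto
  also have "\<dots> = exp (- z * cosh t + \<nu> * t)" by (metis exp_add)
  also have "\<dots> \<le> exp (a^2 / z + (- 1 * t))" using ex by simp
  also have "\<dots> = exp ((\<nu>+1)^2 / z) * exp (- 1 * t)" unfolding a_def by (metis exp_add)
  finally show ?thesis .
qed

lemma integrable_K:
  fixes z \<nu> :: real
  assumes "0 < z" "0 \<le> \<nu>"
  shows "(\<lambda>t. exp (- z * cosh t) * cosh (\<nu> * t)) integrable_on {0..}"
proof (rule measurable_bounded_by_integrable_imp_integrable_real)
  show "(\<lambda>t. exp (- z * cosh t) * cosh (\<nu> * t)) \<in> borel_measurable (lebesgue_on {0..})"
    by (intro continuous_imp_measurable_on_sets_lebesgue continuous_intros) auto
  show "(\<lambda>t. exp ((\<nu>+1)^2 / z) * exp (- 1 * t)) integrable_on {0..}"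
    by (intro integrable_on_mult_right integrable_on_exp_minus_to_infinity) auto
  show "\<And>t. t \<in> {0..} \<Longrightarrow> \<bar>exp (- z * cosh t) * cosh (\<nu> * t)\<bar> \<le> exp ((\<nu>+1)^2 / z) * exp (- 1 * t)"
    using integrand_bound assms by auto
qed auto

lemma lower_integral:
  fixes r :: real assumes r: "r > 0"
  shows "((\<lambda>t. if t \<in> {0..7/(5*r)} then qpol (r*t) else 0) has_integral Qpol (7/5) / r) {0..}"
proof -
  have d: "((\<lambda>t. Qpol (r*t) / r) has_real_derivative qpol (r*t)) (at t)" for t
  proof -
    have "((\<lambda>t. Qpol (r*t)) has_real_derivative qpol (r*t) * r) (at t)"
      by (rule DERIV_chain2[OF Qpol_deriv]) (auto intro!: derivative_eq_intros)
    then have "((\<lambda>t. Qpol (r*t) / r) has_real_derivative qpol (r*t) * r / r) (at t)"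
      by (rule DERIV_cdivide)
    then show ?thesis using r by simp
  qed
  have dw: "((\<lambda>t. Qpol (r*t)/r) has_vector_derivative qpol (r*t)) (at t within {0..7/(5*r)})" for t
    unfolding has_real_derivative_iff_has_vector_derivative[symmetric]
    by (rule has_field_derivative_at_within[OF d])
  have "((\<lambda>t. qpol (r*t)) has_integral (Qpol (r*(7/(5*r))) / r - Qpol (r*0) / r)) {0..7/(5*r)}"
    by (rule fundamental_theorem_of_calculus[OF _ dw]) (use r in simp)
  moreover have "Qpol (r*(7/(5*r))) / r - Qpol (r*0) / r = Qpol (7/5) / r"
    using r by (simp add: Qpol_def)
  ultimately have "((\<lambda>t. qpol (r*t)) has_integral Qpol (7/5) / r) {0..7/(5*r)}" by simp
  then show ?thesis
    by (subst has_integral_restrict) auto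
qed

lemma pointwise:
  fixes r z \<nu> t :: real
  assumes r: "r > 0" "2 \<le> r^2" and z: "0 < z" "z \<le> r^2" and nu: "0 \<le> \<nu>" and t: "0 \<le> t"
  shows "(if t \<in> {0..7/(5*r)} then qpol (r*t) else 0) \<le> exp z * (exp (- z * cosh t) * cosh (\<nu> * t))"
proof (cases "t \<le> 7/(5*r)")
  case False
  then show ?thesis by auto
next
  case True
  define x where "x = r * t"
  have x0: "0 \<le> x" using r t by (simp add: x_def)
  have xle: "x \<le> 7/5" using True r by (simp add: x_def field_simps)
  have x2: "x^2 \<le> 49/25"
  proof -
    have "x^2 \<le> (7/5)^2" using x0 xle by (intro power_mono) auto
    then show ?thesis by (simp add: power2_eq_square)
  qed
  have tx: "t^2 * r^2 = x^2" by (simp add: x_def power_mult_distrib)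
  have t2: "t^2 \<le> 1"
  proof -
    have "t^2 * r^2 \<le> 1 * r^2" using tx x2 r by simp
    moreover have "0 < r^2" using r by simp
    ultimately show ?thesis by (rule mult_right_le_imp_le)
  qed
  have t1: "t \<le> 1" using power2_le_imp_le[of t 1] t2 by simp
  define A where "A = r^2 * (cosh t - 1)"
  have A0: "0 \<le> A" using cosh_real_ge_1[of t] unfolding A_def by simp
  have Ale: "A \<le> x^2/2 + x^4/16"
  proof -
    have "A \<le> r^2 * (t^2/2 + t^4/8)"
      unfolding A_def using cosh_upper[OF t t1] by (intro mult_left_mono) auto
    also have "\<dots> = x^2/2 + x^4 / (8 * r^2)"
    proof -
      have "x^4 = (t^2*r^2)^2" using tx by simp
      then show ?thesis using r tx by (simp add: field_simps power2_eq_square eval_nat_numeral)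
    qed
    also have "\<dots> \<le> x^2/2 + x^4/16"
    proof -
      have "x^4 / (8 * r^2) \<le> x^4 / 16"
        using r by (intro divide_left_mono) auto
      then show ?thesis by simp
    qed
    finally show ?thesis .
  qed
  have "qpol (r*t) = 1 - (x^2/2 + x^4/16) + (x^2/2 + x^4/16)^2/2 - (x^2/2 + x^4/16)^3/6"
    by (simp add: qpol_eq x_def)
  also have "\<dots> \<le> 1 - A + A^2/2 - A^3/6" by (rule E3_mono[OF Ale])
  also have "\<dots> \<le> exp (- A)" by (rule exp_minus_E3[OF A0])
  also have "\<dots> \<le> exp (- (z * (cosh t - 1)))"
  proof -
    have "z * (cosh t - 1) \<le> r^2 * (cosh t - 1)"
      using z cosh_real_ge_1[of t] by (intro mult_right_mono) auto
    then show ?thesis unfolding A_def by simp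
  qed
  also have "\<dots> = exp z * exp (- z * cosh t)"
    by (simp add: exp_add[symmetric] algebra_simps)
  also have "\<dots> \<le> exp z * exp (- z * cosh t) * cosh (\<nu> * t)"
    using cosh_real_ge_1[of "\<nu>*t"] mult_left_mono[of 1 "cosh (\<nu>*t)" "exp z * exp (- z * cosh t)"] by simp
  finally show ?thesis using True t by (simp add: mult.assoc)
qed

theorem proposition5:
  fixes P U L :: int and \<nu> z :: real
  assumes "P \<ge> 1" and "U \<ge> 0" and "real_of_int L \<le> - (real_of_int U + 1) / 2"
    and "\<nu> \<ge> 0" and "0 < z"
    and "z \<le> (1 - 2 powr (- real_of_int P)) * 2 powr (real_of_int U + 1)"
  shows "besselK_scaled \<nu> z \<ge> 2 powr (real_of_int L)"
proof -
  define a where "a = real_of_int U + 1"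
  define r where "r = (2::real) powr (a/2)"
  have r0: "r > 0" unfolding r_def by simp
  have rr: "r^2 = 2 powr a"
    unfolding r_def power2_eq_square powr_add[symmetric] by simp
  have a1: "1 \<le> a" using assms(2) unfolding a_def by simp
  have w2: "2 \<le> r^2"
    unfolding rr using powr_mono[OF a1, of 2] by simp
  have zw: "z \<le> r^2"
  proof -
    have "0 < (2::real) powr (- real_of_int P)" by simp
    then have hh: "(1 - 2 powr (- real_of_int P)) * 2 powr a \<le> 1 * 2 powr a"
      by (intro mult_right_mono) auto
    show ?thesis using assms(6) hh unfolding rr a_def by linarith
  qed
  let ?h = "\<lambda>t. exp (- z * cosh t) * cosh (\<nu> * t)"
  let ?g = "\<lambda>t. if t \<in> {0..7/(5*r)} then qpol (r*t) else 0"
  have int_h: "(\<lambda>t. exp z * ?h t) integrable_on {0..}"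
    using integrable_K[OF assms(5,4)] by (rule integrable_on_mult_right)
  have gi: "(?g has_integral Qpol (7/5) / r) {0..}" by (rule lower_integral[OF r0])
  have gval: "integral {0..} ?g = Qpol (7/5) / r" by (rule integral_unique[OF gi])
  have "besselK_scaled \<nu> z = integral {0..} (\<lambda>t. exp z * ?h t)"
    unfolding besselK_scaled_def besselK_def by (rule integral_mult_right[symmetric])
  also have "\<dots> \<ge> integral {0..} ?g"
  proof (rule integral_le[OF has_integral_integrable[OF gi] int_h])
    fix t :: real assume "t \<in> {0..}"
    then have t0: "0 \<le> t" by simp
    show "?g t \<le> exp z * ?h t" by (rule pointwise[OF r0 w2 assms(5) zw assms(4) t0])
  qed
  finally have b1: "integral {0..} ?g \<le> besselK_scaled \<nu> z" .
  have b2: "1 / r \<le> Qpol (7/5) / r"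
    by (rule divide_right_mono[OF Qpol_val]) (use r0 in simp)
  have La: "real_of_int L \<le> - (a/2)"
    using assms(3) unfolding a_def by (simp only: minus_divide_left)
  have b3: "2 powr (real_of_int L) \<le> 2 powr (- (a/2))"
    by (rule powr_mono[OF La]) simp
  have b4: "(2::real) powr (- (a/2)) = 1 / r"
    by (simp only: r_def powr_minus inverse_eq_divide)
  have "2 powr (real_of_int L) \<le> integral {0..} ?g"
    using b2 b3 b4 gval by linarith
  then show ?thesis using b1 by linarith
qed

end
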